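(* Let $p,q$ be distributions on $[n]$ and $m_1,m_2>0$. Let $X_i\sim\mathrm{Poisson}(m_1p_i)$ and $Y_i\sim\mathrm{Poisson}(m_2q_i)$, $i\in[n]$, all mutually independent. For any fixed set $A\subseteq[n]$, let $V_A=\sum_{i\in A}\left|\frac{X_i}{m_1}-\frac{Y_i}{m_2}\right|$. Then $$\sum_{i\in A}|p_i-q_i|\leq\mathbb E[V_A]\leq\sum_{i\in A}|p_i-q_i|+\left(\frac{|A|}{m_1}+\frac{|A|}{m_2}\right)^{1/2}\leq\sum_{i\in A}|p_i-q_i|+\left(\frac{2|A|}{m_2}\right)^{1/2},$$ and $\mathrm{Var}[V_A]\leq\frac{1}{m_1}+\frac{1}{m_2}$.
   Context: The last inequality in the chain of expectation bounds presumes $m_1\geq m_2$, as in the paper's setting where the sample from $p$ is the larger one. *)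

theory Defs
  imports "HOL-Probability.Probability"
begin

text \<open>Poisson distribution with rate r >= 0; rate 0 is the point mass at 0
  (the library's poisson_pmf is only specified for rates > 0).\<close>
definition poisson :: "real \<Rightarrow> nat pmf" where
  "poisson r = (if r = 0 then return_pmf 0 else poisson_pmf r)"

end

theory Submission
  imports Defs
begin

lemma exp_sums_real: "(\<lambda>k. r ^ k / fact k) sums exp (r::real)"
  using exp_converges[of r] by (simp add: divide_inverse mult.commute)

lemma poisson_S1: "(\<lambda>k. real k * (r ^ k / fact k)) sums (r * exp (r::real))"
proof -
  have "(\<lambda>k. r * (r ^ k / fact k)) sums (r * exp r)"
    by (rule sums_mult[OF exp_sums_real])
  also have "(\<lambda>k. r * (r ^ k / fact k)) = (\<lambda>k. real (Suc k) * (r ^ Suc k / fact (Suc k)))"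
  proof (rule ext)
    fix k
    have "fact (Suc k) = real (Suc k) * (fact k :: real)" by simp
    then show "r * (r ^ k / fact k) = real (Suc k) * (r ^ Suc k / fact (Suc k))"
      by (simp del: of_nat_Suc fact_Suc)
  qed
  finally show ?thesis by (subst (asm) sums_Suc_iff) simp
qed

lemma poisson_S2: "(\<lambda>k. (real k)^2 * (r ^ k / fact k)) sums ((r^2 + r) * exp (r::real))"
proof -
  have "(\<lambda>k. r * (real k * (r ^ k / fact k) + r ^ k / fact k)) sums (r * (r * exp r + exp r))"
    by (rule sums_mult[OF sums_add[OF poisson_S1 exp_sums_real]])
  also have "(\<lambda>k. r * (real k * (r ^ k / fact k) + r ^ k / fact k)) = (\<lambda>k. (real (Suc k))^2 * (r ^ Suc k / fact (Suc k)))"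
  proof (rule ext)
    fix k
    have "fact (Suc k) = real (Suc k) * (fact k :: real)" by simp
    then show "r * (real k * (r ^ k / fact k) + r ^ k / fact k) = (real (Suc k))^2 * (r ^ Suc k / fact (Suc k))"
      by (simp del: of_nat_Suc fact_Suc add: power2_eq_square field_simps) (simp add: algebra_simps)
  qed
  finally show ?thesis by (subst (asm) sums_Suc_iff) (simp add: algebra_simps power2_eq_square)
qed

lemma poisson_moments:
  assumes "0 \<le> r"
  shows "integrable (measure_pmf (poisson r)) (\<lambda>k. real k)"
    and "integrable (measure_pmf (poisson r)) (\<lambda>k. (real k)^2)"
    and "(\<integral>k. real k \<partial>measure_pmf (poisson r)) = r"
    and "(\<integral>k. (real k)^2 \<partial>measure_pmf (poisson r)) = r + r^2"
proof -
  have all: "integrable (measure_pmf (poisson r)) (\<lambda>k. real k) \<and>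
    integrable (measure_pmf (poisson r)) (\<lambda>k. (real k)^2) \<and>
    (\<integral>k. real k \<partial>measure_pmf (poisson r)) = r \<and>
    (\<integral>k. (real k)^2 \<partial>measure_pmf (poisson r)) = r + r^2"
  proof (cases "r = 0")
    case True
    then show ?thesis by (simp add: poisson_def integrable_measure_pmf_finite)
  next
    case False
    with assms have r: "0 < r" by simp
    have P: "measure_pmf (poisson r) = density (count_space UNIV) (\<lambda>k. r ^ k / fact k * exp (-r))"
      using r by (simp add: poisson_def measure_pmf_eq_density)
    have e: "exp r * exp (-r) = 1" by (simp add: exp_minus_inverse)
    have s1: "(\<lambda>k. r ^ k / fact k * exp (-r) * real k) sums r"
    proof -
      have "(\<lambda>k. real k * (r ^ k / fact k) * exp (-r)) sums (r * exp r * exp (-r))"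
        by (rule sums_mult2[OF poisson_S1])
      moreover have "r * exp r * exp (-r) = r" using e by (simp add: mult.assoc)
      moreover have "(\<lambda>k. r ^ k / fact k * exp (-r) * real k) = (\<lambda>k. real k * (r ^ k / fact k) * exp (-r))"
        by (simp add: fun_eq_iff ac_simps)
      ultimately show ?thesis by simp
    qed
    have s2: "(\<lambda>k. r ^ k / fact k * exp (-r) * (real k)^2) sums (r + r^2)"
    proof -
      have "(\<lambda>k. (real k)^2 * (r ^ k / fact k) * exp (-r)) sums ((r^2 + r) * exp r * exp (-r))"
        by (rule sums_mult2[OF poisson_S2])
      moreover have "(r^2 + r) * exp r * exp (-r) = r + r^2" using e by (simp add: mult.assoc)
      moreover have "(\<lambda>k. r ^ k / fact k * exp (-r) * (real k)^2) = (\<lambda>k. (real k)^2 * (r ^ k / fact k) * exp (-r))"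
        by (simp add: fun_eq_iff ac_simps)
      ultimately show ?thesis by simp
    qed
    have i1: "integrable (count_space UNIV) (\<lambda>k. r ^ k / fact k * exp (-r) * real k)"
      using s1 r by (subst integrable_count_space_nat_iff) (simp add: sums_summable)
    have i2: "integrable (count_space UNIV) (\<lambda>k. r ^ k / fact k * exp (-r) * (real k)^2)"
      using s2 r by (subst integrable_count_space_nat_iff) (simp add: sums_summable)
    show ?thesis
      unfolding P using r i1 i2 sums_unique[OF s1, symmetric] sums_unique[OF s2, symmetric]
      by (simp add: integrable_density integral_density integral_count_space_nat)
  qed
  then show "integrable (measure_pmf (poisson r)) (\<lambda>k. real k)"
    and "integrable (measure_pmf (poisson r)) (\<lambda>k. (real k)^2)"
    and "(\<integral>k. real k \<partial>measure_pmf (poisson r)) = r"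
    and "(\<integral>k. (real k)^2 \<partial>measure_pmf (poisson r)) = r + r^2" by auto
qed


lemma pmf_transfer:
  fixes f :: "nat \<Rightarrow> real"
  assumes "W \<in> measurable M (count_space UNIV)" "distr M (count_space UNIV) W = measure_pmf P"
  shows "integrable M (\<lambda>\<omega>. f (W \<omega>)) \<longleftrightarrow> integrable (measure_pmf P) f"
    and "(\<integral>\<omega>. f (W \<omega>) \<partial>M) = (\<integral>x. f x \<partial>measure_pmf P)"
proof -
  have fm: "f \<in> borel_measurable (count_space UNIV)" by simp
  show "integrable M (\<lambda>\<omega>. f (W \<omega>)) \<longleftrightarrow> integrable (measure_pmf P) f"
    using integrable_distr_eq[OF assms(1) fm] assms(2) by simp
  show "(\<integral>\<omega>. f (W \<omega>) \<partial>M) = (\<integral>x. f x \<partial>measure_pmf P)"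
    using integral_distr[OF assms(1) fm] assms(2) by simp
qed

lemma poisson_transfer:
  assumes "W \<in> measurable M (count_space UNIV)" "distr M (count_space UNIV) W = measure_pmf (poisson r)"
    and "0 \<le> r"
  shows "integrable M (\<lambda>\<omega>. real (W \<omega>)) \<and> integrable M (\<lambda>\<omega>. (real (W \<omega>))^2)
    \<and> (\<integral>\<omega>. real (W \<omega>) \<partial>M) = r \<and> (\<integral>\<omega>. (real (W \<omega>))^2 \<partial>M) = r + r^2"
  using pmf_transfer[OF assms(1,2), of "\<lambda>k. real k"] pmf_transfer[OF assms(1,2), of "\<lambda>k. (real k)^2"]
    poisson_moments[OF assms(3)] by simp

lemma (in prob_space) indep_restrict_compose:
  assumes ind: "indep_vars M' F I" and "Sa \<inter> Sb = {}" "Sa \<subseteq> I" "Sb \<subseteq> I"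
    and g: "g \<in> borel_measurable (PiM Sa M')" and h: "h \<in> borel_measurable (PiM Sb M')"
  shows "indep_var borel (\<lambda>\<omega>. g (restrict (\<lambda>k. F k \<omega>) Sa)) borel (\<lambda>\<omega>. h (restrict (\<lambda>k. F k \<omega>) Sb))"
  using indep_var_compose[OF indep_var_restrict[OF ind assms(2-4)] g h] by (simp add: comp_def)

theorem lemma1:
  fixes M :: "'a measure" and n :: nat
    and p q :: "nat \<Rightarrow> real" and m1 m2 :: real
    and X Y :: "nat \<Rightarrow> 'a \<Rightarrow> nat" and A :: "nat set"
  assumes M: "prob_space M"
    and p_nonneg: "\<And>i. i < n \<Longrightarrow> 0 \<le> p i" and p_sum: "(\<Sum>i<n. p i) = 1"
    and q_nonneg: "\<And>i. i < n \<Longrightarrow> 0 \<le> q i" and q_sum: "(\<Sum>i<n. q i) = 1"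
    and m1: "0 < m1" and m2: "0 < m2" and m12: "m2 \<le> m1"
    and X_meas: "\<And>i. i < n \<Longrightarrow> X i \<in> measurable M (count_space UNIV)"
    and Y_meas: "\<And>i. i < n \<Longrightarrow> Y i \<in> measurable M (count_space UNIV)"
    and X_distr: "\<And>i. i < n \<Longrightarrow> distr M (count_space UNIV) (X i) = measure_pmf (poisson (m1 * p i))"
    and Y_distr: "\<And>i. i < n \<Longrightarrow> distr M (count_space UNIV) (Y i) = measure_pmf (poisson (m2 * q i))"
    and indep: "prob_space.indep_vars M (\<lambda>_. count_space UNIV)
                  (\<lambda>k. case k of Inl i \<Rightarrow> X i | Inr i \<Rightarrow> Y i)
                  (Inl ` {..<n} \<union> Inr ` {..<n})"
    and A: "A \<subseteq> {..<n}"
  defines "V \<equiv> (\<lambda>\<omega>. \<Sum>i\<in>A. \<bar>real (X i \<omega>) / m1 - real (Y i \<omega>) / m2\<bar>)"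
  shows "(\<Sum>i\<in>A. \<bar>p i - q i\<bar>) \<le> (\<integral>\<omega>. V \<omega> \<partial>M)
    \<and> (\<integral>\<omega>. V \<omega> \<partial>M) \<le> (\<Sum>i\<in>A. \<bar>p i - q i\<bar>) + sqrt (real (card A) / m1 + real (card A) / m2)
    \<and> (\<Sum>i\<in>A. \<bar>p i - q i\<bar>) + sqrt (real (card A) / m1 + real (card A) / m2)
           \<le> (\<Sum>i\<in>A. \<bar>p i - q i\<bar>) + sqrt (2 * real (card A) / m2)
    \<and> (\<integral>\<omega>. (V \<omega> - (\<integral>\<omega>. V \<omega> \<partial>M))\<^sup>2 \<partial>M) \<le> 1 / m1 + 1 / m2"
proof -
  interpret prob_space M by (rule M)
  let ?F = "\<lambda>k. case k of Inl i \<Rightarrow> X i | Inr i \<Rightarrow> Y i"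
  let ?I = "Inl ` {..<n} \<union> Inr ` {..<n} :: (nat + nat) set"
  define Z where "Z = (\<lambda>i \<omega>. real (X i \<omega>) / m1 - real (Y i \<omega>) / m2)"
  define W where "W = (\<lambda>i \<omega>. \<bar>Z i \<omega>\<bar>)"
  define v where "v = (\<lambda>i. p i / m1 + q i / m2)"
  have finA: "finite A" using A finite_subset by blast
  have m1': "0 \<le> m1" "m1 \<noteq> 0" and m2': "0 \<le> m2" "m2 \<noteq> 0" using m1 m2 by auto
  have Xm: "integrable M (\<lambda>\<omega>. real (X i \<omega>)) \<and> integrable M (\<lambda>\<omega>. (real (X i \<omega>))^2)
    \<and> (\<integral>\<omega>. real (X i \<omega>) \<partial>M) = m1 * p i \<and> (\<integral>\<omega>. (real (X i \<omega>))^2 \<partial>M) = m1 * p i + (m1 * p i)^2"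
    if "i < n" for i
    using poisson_transfer[OF X_meas[OF that] X_distr[OF that] mult_nonneg_nonneg[OF m1'(1) p_nonneg[OF that]]]
    by simp
  have Ym: "integrable M (\<lambda>\<omega>. real (Y i \<omega>)) \<and> integrable M (\<lambda>\<omega>. (real (Y i \<omega>))^2)
    \<and> (\<integral>\<omega>. real (Y i \<omega>) \<partial>M) = m2 * q i \<and> (\<integral>\<omega>. (real (Y i \<omega>))^2 \<partial>M) = m2 * q i + (m2 * q i)^2"
    if "i < n" for i
    using poisson_transfer[OF Y_meas[OF that] Y_distr[OF that] mult_nonneg_nonneg[OF m2'(1) q_nonneg[OF that]]]
    by simp
  have indF: "indep_vars (\<lambda>_. count_space UNIV) ?F ?I" using indep by simp
  have XY: "integrable M (\<lambda>\<omega>. real (X i \<omega>) * real (Y i \<omega>)) \<and>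
      (\<integral>\<omega>. real (X i \<omega>) * real (Y i \<omega>) \<partial>M) = m1 * p i * (m2 * q i)" if "i < n" for i
  proof -
    have "indep_var borel (\<lambda>\<omega>. (\<lambda>f. real (f (Inl i))) (restrict (\<lambda>k. ?F k \<omega>) {Inl i}))
        borel (\<lambda>\<omega>. (\<lambda>f. real (f (Inr i))) (restrict (\<lambda>k. ?F k \<omega>) {Inr i}))"
      apply (rule indep_restrict_compose[OF indF])
      using that by (auto, measurable)
    then have ind: "indep_var borel (\<lambda>\<omega>. real (X i \<omega>)) borel (\<lambda>\<omega>. real (Y i \<omega>))" by simp
    show ?thesis using indep_var_lebesgue_integral[OF ind] indep_var_integrable[OF ind] Xm[OF that] Ym[OF that]
      by simp
  qed
  have Zm: "integrable M (Z i) \<and> integrable M (\<lambda>\<omega>. (Z i \<omega>)^2) \<and> expectation (Z i) = p i - q i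
     \<and> expectation (\<lambda>\<omega>. (Z i \<omega>)^2) = v i + (p i - q i)^2" if "i < n" for i
  proof -
    from Xm[OF that] Ym[OF that] XY[OF that] have
      x1: "integrable M (\<lambda>\<omega>. real (X i \<omega>))" and x2: "integrable M (\<lambda>\<omega>. (real (X i \<omega>))^2)"
      and ex1: "(\<integral>\<omega>. real (X i \<omega>) \<partial>M) = m1 * p i" and ex2: "(\<integral>\<omega>. (real (X i \<omega>))^2 \<partial>M) = m1 * p i + (m1 * p i)^2"
      and y1: "integrable M (\<lambda>\<omega>. real (Y i \<omega>))" and y2: "integrable M (\<lambda>\<omega>. (real (Y i \<omega>))^2)"
      and ey1: "(\<integral>\<omega>. real (Y i \<omega>) \<partial>M) = m2 * q i" and ey2: "(\<integral>\<omega>. (real (Y i \<omega>))^2 \<partial>M) = m2 * q i + (m2 * q i)^2"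
      and xy: "integrable M (\<lambda>\<omega>. real (X i \<omega>) * real (Y i \<omega>))"
      and exy: "(\<integral>\<omega>. real (X i \<omega>) * real (Y i \<omega>) \<partial>M) = m1 * p i * (m2 * q i)"
      by auto
    have sq: "(\<lambda>\<omega>. (Z i \<omega>)^2) = (\<lambda>\<omega>. (real (X i \<omega>))^2 / m1^2 + (real (Y i \<omega>))^2 / m2^2
        - 2 / (m1 * m2) * (real (X i \<omega>) * real (Y i \<omega>)))"
      using m1' m2' by (auto simp: Z_def fun_eq_iff power2_eq_square field_simps)
    have zi: "integrable M (Z i)" unfolding Z_def using x1 y1 by simp
    have z2i: "integrable M (\<lambda>\<omega>. (Z i \<omega>)^2)" unfolding sq using x2 y2 xy by simp
    have ez: "expectation (Z i) = p i - q i" unfolding Z_def using x1 y1 ex1 ey1 m1' m2' by simp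
    have ez2: "expectation (\<lambda>\<omega>. (Z i \<omega>)^2) = v i + (p i - q i)^2"
      unfolding sq using x2 y2 xy ex2 ey2 exy m1' m2'
      by (simp add: v_def power2_eq_square field_simps)
    show ?thesis using zi z2i ez ez2 by simp
  qed
  have vnn: "0 \<le> v i" if "i < n" for i using p_nonneg[OF that] q_nonneg[OF that] m1 m2 by (simp add: v_def)
  have Wm: "integrable M (W i) \<and> integrable M (\<lambda>\<omega>. (W i \<omega>)^2) \<and> \<bar>p i - q i\<bar> \<le> expectation (W i)
      \<and> expectation (W i) \<le> \<bar>p i - q i\<bar> + sqrt (v i) \<and> variance (W i) \<le> v i" if "i < n" for i
  proof -
    from Zm[OF that] have zi: "integrable M (Z i)" and z2i: "integrable M (\<lambda>\<omega>. (Z i \<omega>)^2)"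
      and ez: "expectation (Z i) = p i - q i" and ez2: "expectation (\<lambda>\<omega>. (Z i \<omega>)^2) = v i + (p i - q i)^2"
      by auto
    have wi: "integrable M (W i)" unfolding W_def using zi by simp
    have w2: "(\<lambda>\<omega>. (W i \<omega>)^2) = (\<lambda>\<omega>. (Z i \<omega>)^2)" by (simp add: W_def fun_eq_iff)
    have w2i: "integrable M (\<lambda>\<omega>. (W i \<omega>)^2)" using z2i w2 by simp
    have low: "\<bar>p i - q i\<bar> \<le> expectation (W i)" using integral_abs_bound[of M "Z i"] ez unfolding W_def by simp
    have var: "variance (W i) = v i + (p i - q i)^2 - (expectation (W i))^2"
      using variance_eq[OF wi w2i] w2 ez2 by simp
    have "(expectation (W i))^2 \<le> v i + (p i - q i)^2" using variance_positive[of "W i"] var by simp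
    then have "expectation (W i) \<le> sqrt (v i + (p i - q i)^2)" by (simp add: real_le_rsqrt)
    also have "\<dots> \<le> \<bar>p i - q i\<bar> + sqrt (v i)"
    proof (rule real_le_lsqrt)
      show "0 \<le> \<bar>p i - q i\<bar> + sqrt (v i)" using vnn[OF that] by simp
      have "(\<bar>p i - q i\<bar> + sqrt (v i))^2 = (p i - q i)^2 + 2 * (\<bar>p i - q i\<bar> * sqrt (v i)) + v i"
        using vnn[OF that] by (simp add: power2_sum)
      moreover have "0 \<le> \<bar>p i - q i\<bar> * sqrt (v i)" using vnn[OF that] by simp
      ultimately show "v i + (p i - q i)^2 \<le> (\<bar>p i - q i\<bar> + sqrt (v i))^2" by linarith
    qed
    finally have up: "expectation (W i) \<le> \<bar>p i - q i\<bar> + sqrt (v i)" .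
    have "\<bar>p i - q i\<bar>^2 \<le> (expectation (W i))^2" by (rule power_mono[OF low]) simp
    then have "variance (W i) \<le> v i" using var by simp
    then show ?thesis using wi w2i low up by simp
  qed
  have Veq: "V = (\<lambda>\<omega>. \<Sum>i\<in>A. W i \<omega>)" by (simp add: V_def W_def Z_def)
  have WmA: "integrable M (W i) \<and> integrable M (\<lambda>\<omega>. (W i \<omega>)^2) \<and> \<bar>p i - q i\<bar> \<le> expectation (W i)
      \<and> expectation (W i) \<le> \<bar>p i - q i\<bar> + sqrt (v i) \<and> variance (W i) \<le> v i \<and> 0 \<le> v i" if "i \<in> A" for i
    using Wm[of i] vnn[of i] that A by auto
  have EV: "expectation V = (\<Sum>i\<in>A. expectation (W i))"
    unfolding Veq using Bochner_Integration.integral_sum[where I=A and M=M and f=W] WmA by auto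
  have P1: "(\<Sum>i\<in>A. \<bar>p i - q i\<bar>) \<le> expectation V"
    unfolding EV by (rule sum_mono) (use WmA in auto)
  have sv: "(\<Sum>i\<in>A. v i) \<le> 1 / m1 + 1 / m2"
  proof -
    have sp: "(\<Sum>i\<in>A. p i) \<le> 1"
      using sum_mono2[OF finite_lessThan A, of p] p_nonneg p_sum by auto
    have sq: "(\<Sum>i\<in>A. q i) \<le> 1"
      using sum_mono2[OF finite_lessThan A, of q] q_nonneg q_sum by auto
    have "(\<Sum>i\<in>A. v i) = (\<Sum>i\<in>A. p i) / m1 + (\<Sum>i\<in>A. q i) / m2"
      by (simp add: v_def sum.distrib sum_divide_distrib)
    also have "\<dots> \<le> 1 / m1 + 1 / m2"
      using divide_right_mono[OF sp m1'(1)] divide_right_mono[OF sq m2'(1)] by linarith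
    finally show ?thesis .
  qed
  have cs: "(\<Sum>i\<in>A. sqrt (v i)) \<le> sqrt (real (card A) / m1 + real (card A) / m2)"
  proof (rule real_le_rsqrt)
    have "(\<Sum>i\<in>A. sqrt (v i))^2 \<le> (\<Sum>i\<in>A. (sqrt (v i))^2) * card A"
      by (rule sum_squared_le_sum_of_squares)
    also have "(\<Sum>i\<in>A. (sqrt (v i))^2) = (\<Sum>i\<in>A. v i)"
      by (rule sum.cong) (use WmA in auto)
    also have "(\<Sum>i\<in>A. v i) * card A \<le> (1 / m1 + 1 / m2) * card A"
      by (rule mult_right_mono[OF sv]) simp
    also have "\<dots> = real (card A) / m1 + real (card A) / m2" by (simp add: field_simps)
    finally show "(\<Sum>i\<in>A. sqrt (v i))^2 \<le> real (card A) / m1 + real (card A) / m2" .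
  qed
  have P2: "expectation V \<le> (\<Sum>i\<in>A. \<bar>p i - q i\<bar>) + sqrt (real (card A) / m1 + real (card A) / m2)"
  proof -
    have "expectation V \<le> (\<Sum>i\<in>A. \<bar>p i - q i\<bar> + sqrt (v i))"
      unfolding EV by (rule sum_mono) (use WmA in auto)
    also have "\<dots> = (\<Sum>i\<in>A. \<bar>p i - q i\<bar>) + (\<Sum>i\<in>A. sqrt (v i))" by (simp add: sum.distrib)
    finally show ?thesis using cs by linarith
  qed
  have P3: "sqrt (real (card A) / m1 + real (card A) / m2) \<le> sqrt (2 * real (card A) / m2)"
  proof -
    have "real (card A) / m1 \<le> real (card A) / m2"
      by (rule divide_left_mono[OF m12]) (use m1 m2 in auto)
    then show ?thesis by simp
  qed
  define D where "D = (\<lambda>i \<omega>. W i \<omega> - expectation (W i))"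
  have Dprod: "integrable M (\<lambda>\<omega>. D i \<omega> * D j \<omega>) \<and>
      expectation (\<lambda>\<omega>. D i \<omega> * D j \<omega>) = (if i = j then variance (W i) else 0)"
    if "i \<in> A" "j \<in> A" for i j
  proof (cases "i = j")
    case True
    from WmA[OF that(1)] have wi: "integrable M (W i)" and w2i: "integrable M (\<lambda>\<omega>. (W i \<omega>)^2)" by auto
    have eq: "(\<lambda>\<omega>. D i \<omega> * D j \<omega>) = (\<lambda>\<omega>. (W i \<omega>)^2 - 2 * expectation (W i) * W i \<omega> + (expectation (W i))^2)"
      using True by (simp add: D_def fun_eq_iff power2_eq_square algebra_simps)
    have "integrable M (\<lambda>\<omega>. D i \<omega> * D j \<omega>)" unfolding eq using wi w2i by simp
    moreover have "expectation (\<lambda>\<omega>. D i \<omega> * D j \<omega>) = variance (W i)"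
      using True by (simp add: D_def power2_eq_square)
    ultimately show ?thesis using True by simp
  next
    case False
    have ij: "i < n" "j < n" using that A by auto
    let ?g = "\<lambda>f. \<bar>real (f (Inl i)) / m1 - real (f (Inr i)) / m2\<bar> - expectation (W i)"
    let ?h = "\<lambda>f. \<bar>real (f (Inl j)) / m1 - real (f (Inr j)) / m2\<bar> - expectation (W j)"
    have "indep_var borel (\<lambda>\<omega>. ?g (restrict (\<lambda>k. ?F k \<omega>) {Inl i, Inr i}))
        borel (\<lambda>\<omega>. ?h (restrict (\<lambda>k. ?F k \<omega>) {Inl j, Inr j}))"
      apply (rule indep_restrict_compose[OF indF])
      using ij False by (auto, measurable)
    then have ind: "indep_var borel (D i) borel (D j)"
      by (simp add: D_def W_def Z_def)
    from WmA[OF that(1)] WmA[OF that(2)] have wi: "integrable M (W i)" "integrable M (W j)" by auto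
    have di: "integrable M (D i)" "integrable M (D j)" unfolding D_def using wi by auto
    have ed: "expectation (D i) = 0" unfolding D_def using wi by (simp add: prob_space)
    show ?thesis using indep_var_lebesgue_integral[OF ind di] indep_var_integrable[OF ind di] ed False
      by simp
  qed
  have Vsq: "(\<lambda>\<omega>. (V \<omega> - expectation V)^2) = (\<lambda>\<omega>. \<Sum>i\<in>A. \<Sum>j\<in>A. D i \<omega> * D j \<omega>)"
  proof
    fix \<omega>
    have "V \<omega> - expectation V = (\<Sum>i\<in>A. D i \<omega>)"
      unfolding EV by (simp add: Veq D_def sum_subtractf)
    then show "(V \<omega> - expectation V)^2 = (\<Sum>i\<in>A. \<Sum>j\<in>A. D i \<omega> * D j \<omega>)"
      by (simp add: power2_eq_square sum_product)
  qed
  have "expectation (\<lambda>\<omega>. (V \<omega> - expectation V)^2) = (\<Sum>i\<in>A. \<Sum>j\<in>A. expectation (\<lambda>\<omega>. D i \<omega> * D j \<omega>))"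
    unfolding Vsq
    by (subst Bochner_Integration.integral_sum, use Dprod in \<open>auto intro!: integrable_sum\<close>)
  also have "\<dots> = (\<Sum>i\<in>A. variance (W i))"
    by (rule sum.cong) (auto simp: Dprod finA sum.delta)
  also have "\<dots> \<le> (\<Sum>i\<in>A. v i)" by (rule sum_mono) (use WmA in auto)
  finally have P4: "expectation (\<lambda>\<omega>. (V \<omega> - expectation V)^2) \<le> 1 / m1 + 1 / m2" using sv by linarith
  show ?thesis using P1 P2 P3 P4 by simp
qed

end
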